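(* Let $-\infty\le a<b\le\infty$, let $\kappa,\varphi:(a,b)\to\mathbb C$ be measurable with $\kappa\in L^2(a,b)$ and $\mathbb 1_{(a,c)}\varphi\in L^2(a,b)$ for every $c\in(a,b)$. Choose $c_0:=a<c_1<c_2<\dots<b$ with $\|\mathbb 1_{(c_n,b)}\kappa\|^2=2^{-n}\|\kappa\|^2$, and set $J_n=(c_{n-1},c_n)$, $\omega_n=\|\mathbb 1_{J_n}\kappa\|\cdot\|\mathbb 1_{J_n}\varphi\|$. Then \[ \sup_{n\in\mathbb N}\omega_n<\infty\iff\limsup_{t\nearrow b}\|\mathbb 1_{(a,t)}\varphi\|\cdot\|\mathbb 1_{(t,b)}\kappa\|<\infty . \]
   Context: Norms are $L^2(a,b)$-norms; $\mathbb 1_E$ is the indicator function of $E$. *)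

theory Defs
  imports "HOL-Analysis.Analysis"
begin

definition ioo :: "ereal \<Rightarrow> ereal \<Rightarrow> real set" where
  "ioo a b = {x. a < ereal x \<and> ereal x < b}"

definition L2sq :: "real set \<Rightarrow> (real \<Rightarrow> complex) \<Rightarrow> ennreal" where
  "L2sq S f = (\<integral>\<^sup>+ x. indicator S x * ennreal ((cmod (f x))\<^sup>2) \<partial>lebesgue)"

definition in_L2 :: "real set \<Rightarrow> (real \<Rightarrow> complex) \<Rightarrow> bool" where
  "in_L2 S f \<longleftrightarrow> set_borel_measurable lebesgue S f \<and> L2sq S f < \<infinity>"

text \<open>L2 norm of the indicator of S times f (meaningful when finite).\<close>
definition L2norm :: "real set \<Rightarrow> (real \<Rightarrow> complex) \<Rightarrow> real" where
  "L2norm S f = sqrt (enn2real (L2sq S f))"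

end

theory Submission
  imports Defs
begin

lemma L2sq_mono: "S \<subseteq> S' \<Longrightarrow> L2sq S f \<le> L2sq S' f"
  unfolding L2sq_def
  by (intro nn_integral_mono) (auto simp: indicator_def)

lemma ioo_meas[measurable]: "ioo x y \<in> sets lebesgue"
proof -
  have "{t. x < ereal t \<and> ereal t < y} \<in> sets borel" by measurable
  then show ?thesis unfolding ioo_def by auto
qed

lemma L2sq_restrict:
  assumes "S \<subseteq> U" shows "L2sq S f = L2sq S (\<lambda>x. indicator U x *\<^sub>R f x)"
  unfolding L2sq_def
  by (intro nn_integral_cong) (use assms in \<open>auto simp: indicator_def\<close>)

lemma L2sq_split:
  assumes "f \<in> borel_measurable lebesgue"
  shows "L2sq (ioo x z) f \<le> L2sq (ioo x y) f + L2sq (ioo y z) f"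
proof -
  have ae: "AE t in lebesgue. t \<noteq> real_of_ereal y"
    by (rule AE_completion) (rule AE_lborel_singleton)
  have "L2sq (ioo x z) f \<le> (\<integral>\<^sup>+ t. indicator (ioo x y) t * ennreal ((cmod (f t))\<^sup>2)
       + indicator (ioo y z) t * ennreal ((cmod (f t))\<^sup>2) \<partial>lebesgue)"
    unfolding L2sq_def
  proof (rule nn_integral_mono_AE)
    show "AE t in lebesgue. indicator (ioo x z) t * ennreal ((cmod (f t))\<^sup>2) \<le>
       indicator (ioo x y) t * ennreal ((cmod (f t))\<^sup>2) + indicator (ioo y z) t * ennreal ((cmod (f t))\<^sup>2)"
      using ae
    proof eventually_elim
      case (elim t)
      have "t \<in> ioo x z \<Longrightarrow> t \<in> ioo x y \<or> t \<in> ioo y z"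
        using elim by (cases y) (auto simp: ioo_def)
      then show ?case by (auto simp: indicator_def)
    qed
  qed
  also have "\<dots> = L2sq (ioo x y) f + L2sq (ioo y z) f"
    unfolding L2sq_def using assms by (intro nn_integral_add) auto
  finally show ?thesis .
qed

lemma pow_half_aux: "(2::real)^(Suc (Suc m)) * (1/2)^m = 4"
proof -
  have "(2::real)^(Suc (Suc m)) * (1/2)^m = 4 * (2 * (1/2))^m"
    by (simp only: power_mult_distrib power_Suc)
  then show ?thesis by simp
qed

theorem lemma5p3:
  fixes a b :: ereal and \<kappa> \<phi> :: "real \<Rightarrow> complex" and c :: "nat \<Rightarrow> ereal"
  assumes "a < b"
    and "set_borel_measurable lebesgue (ioo a b) \<kappa>"
    and "set_borel_measurable lebesgue (ioo a b) \<phi>"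
    and "in_L2 (ioo a b) \<kappa>"
    and "\<And>t::real. a < ereal t \<Longrightarrow> ereal t < b \<Longrightarrow> in_L2 (ioo a (ereal t)) \<phi>"
    and "c 0 = a"
    and "strict_mono c"
    and "\<And>n. c n < b"
    and "\<And>n. L2norm (ioo (c n) b) \<kappa> ^ 2 = (1/2) ^ n * L2norm (ioo a b) \<kappa> ^ 2"
  shows "bdd_above ((\<lambda>n. L2norm (ioo (c (n - 1)) (c n)) \<kappa> * L2norm (ioo (c (n - 1)) (c n)) \<phi>) ` {1..})
     \<longleftrightarrow> Limsup (at_left b) (\<lambda>t. ereal (L2norm (ioo a t) \<phi> * L2norm (ioo t b) \<kappa>)) < \<infinity>"
proof -
  define gk where "gk = (\<lambda>x. indicator (ioo a b) x *\<^sub>R \<kappa> x)"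
  define gp where "gp = (\<lambda>x. indicator (ioo a b) x *\<^sub>R \<phi> x)"
  have gk_m: "gk \<in> borel_measurable lebesgue" using assms(2) unfolding gk_def set_borel_measurable_def .
  have gp_m: "gp \<in> borel_measurable lebesgue" using assms(3) unfolding gp_def set_borel_measurable_def .
  define T where "T t = enn2real (L2sq (ioo t b) \<kappa>)" for t
  define P where "P t = enn2real (L2sq (ioo a t) \<phi>)" for t
  define K where "K = enn2real (L2sq (ioo a b) \<kappa>)"
  define A where "A n = enn2real (L2sq (ioo (c (n-1)) (c n)) \<kappa>)" for n
  define B where "B n = enn2real (L2sq (ioo (c (n-1)) (c n)) \<phi>)" for n
  have ioo_sub: "ioo x y \<subseteq> ioo x' y'" if "x' \<le> x" "y \<le> y'" for x y x' y'
    using that unfolding ioo_def by (auto intro: order.strict_trans1 order.strict_trans2)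
  have ioo_empty: "ioo x y = {}" if "y \<le> x" for x y
    using that unfolding ioo_def by auto
  have L2sq_empty: "L2sq {} f = 0" for f unfolding L2sq_def by simp
  have cmono: "c m \<le> c n" if "m \<le> n" for m n
    using assms(7) that by (simp add: strict_mono_less_eq)
  have cge: "a \<le> c n" for n using cmono[of 0 n] assms(6) by simp
  have Kfin: "L2sq (ioo a b) \<kappa> < \<infinity>" using assms(4) unfolding in_L2_def by simp
  have fin_k: "L2sq S \<kappa> < \<infinity>" if "S \<subseteq> ioo a b" for S
    using L2sq_mono[OF that, where f=\<kappa>] Kfin by (simp add: order.strict_trans1)
  have fin_p: "L2sq (ioo a z) \<phi> < \<infinity>" if zb: "z < b" for z
  proof (cases "z \<le> a")
    case True then show ?thesis by (simp add: ioo_empty L2sq_empty)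
  next
    case False
    then obtain r where "z = ereal r" using zb by (cases z) auto
    then show ?thesis using assms(5)[of r] False zb unfolding in_L2_def by auto
  qed
  have fin_p': "L2sq S \<phi> < \<infinity>" if "S \<subseteq> ioo a z" "z < b" for S z
    using L2sq_mono[OF that(1), where f=\<phi>] fin_p[OF that(2)] by (simp add: order.strict_trans1)
  have mono_k: "enn2real (L2sq S \<kappa>) \<le> enn2real (L2sq S' \<kappa>)" if "S \<subseteq> S'" "S' \<subseteq> ioo a b" for S S'
    using L2sq_mono[OF that(1), where f=\<kappa>] fin_k[OF that(2)] by (intro enn2real_mono) auto
  have mono_p: "enn2real (L2sq S \<phi>) \<le> enn2real (L2sq S' \<phi>)" if "S \<subseteq> S'" "S' \<subseteq> ioo a z" "z < b" for S S' z
    using L2sq_mono[OF that(1), where f=\<phi>] fin_p'[OF that(2,3)] by (intro enn2real_mono) auto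
  have split_k: "enn2real (L2sq (ioo x z) \<kappa>) \<le> enn2real (L2sq (ioo x y) \<kappa>) + enn2real (L2sq (ioo y z) \<kappa>)"
    if "a \<le> x" "x \<le> y" "y \<le> z" "z \<le> b" for x y z
  proof -
    note zb = that(4) order.trans[OF that(3,4)]
    note ay = order.trans[OF that(1,2)]
    note s1 = ioo_sub[OF that(1) zb(1)] ioo_sub[OF that(1) zb(2)] ioo_sub[OF ay zb(1)]
    have "L2sq (ioo x z) \<kappa> \<le> L2sq (ioo x y) \<kappa> + L2sq (ioo y z) \<kappa>"
      using L2sq_split[OF gk_m, of x z y] unfolding gk_def
      by (simp add: L2sq_restrict[OF s1(1), of \<kappa>] L2sq_restrict[OF s1(2), of \<kappa>] L2sq_restrict[OF s1(3), of \<kappa>])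
    then have "enn2real (L2sq (ioo x z) \<kappa>) \<le> enn2real (L2sq (ioo x y) \<kappa> + L2sq (ioo y z) \<kappa>)"
      using fin_k[OF s1(2)] fin_k[OF s1(3)] by (intro enn2real_mono) auto
    then show ?thesis using fin_k[OF s1(2)] fin_k[OF s1(3)] by (simp add: enn2real_plus)
  qed
  have split_p: "enn2real (L2sq (ioo x z) \<phi>) \<le> enn2real (L2sq (ioo x y) \<phi>) + enn2real (L2sq (ioo y z) \<phi>)"
    if "a \<le> x" "x \<le> y" "y \<le> z" "z < b" for x y z
  proof -
    have zb0: "z \<le> b" using that(4) by (rule less_imp_le)
    note zb = zb0 order.trans[OF that(3) zb0]
    note ay = order.trans[OF that(1,2)]
    note s1 = ioo_sub[OF that(1) zb(1)] ioo_sub[OF that(1) zb(2)] ioo_sub[OF ay zb(1)]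
    note s2 = ioo_sub[OF that(1) that(3)] ioo_sub[OF ay order.refl]
    have "L2sq (ioo x z) \<phi> \<le> L2sq (ioo x y) \<phi> + L2sq (ioo y z) \<phi>"
      using L2sq_split[OF gp_m, of x z y] unfolding gp_def
      by (simp add: L2sq_restrict[OF s1(1), of \<phi>] L2sq_restrict[OF s1(2), of \<phi>] L2sq_restrict[OF s1(3), of \<phi>])
    then have "enn2real (L2sq (ioo x z) \<phi>) \<le> enn2real (L2sq (ioo x y) \<phi> + L2sq (ioo y z) \<phi>)"
      using fin_p'[OF s2(1) that(4)] fin_p'[OF s2(2) that(4)] by (intro enn2real_mono) auto
    then show ?thesis using fin_p'[OF s2(1) that(4)] fin_p'[OF s2(2) that(4)] by (simp add: enn2real_plus)
  qed
  have hT: "T (c n) = (1/2)^n * K" for n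
    using assms(9)[of n] unfolding L2norm_def T_def K_def by simp
  have Tnn: "0 \<le> T t" for t unfolding T_def by simp
  have Pnn: "0 \<le> P t" for t unfolding P_def by simp
  have Knn: "0 \<le> K" unfolding K_def by simp
  have Ann: "0 \<le> A n" for n unfolding A_def by simp
  have Bnn: "0 \<le> B n" for n unfolding B_def by simp
  have omega: "L2norm (ioo (c (n - 1)) (c n)) \<kappa> * L2norm (ioo (c (n - 1)) (c n)) \<phi> = sqrt (A n) * sqrt (B n)" for n
    unfolding L2norm_def A_def B_def ..
  have fval: "L2norm (ioo a t) \<phi> * L2norm (ioo t b) \<kappa> = sqrt (P t) * sqrt (T t)" for t
    unfolding L2norm_def P_def T_def ..
  show ?thesis
  proof
    assume "bdd_above ((\<lambda>n. L2norm (ioo (c (n - 1)) (c n)) \<kappa> * L2norm (ioo (c (n - 1)) (c n)) \<phi>) ` {1..})"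
    then obtain M0 where M0: "\<And>n. n \<ge> 1 \<Longrightarrow> sqrt (A n) * sqrt (B n) \<le> M0"
      unfolding bdd_above_def omega by auto
    define M where "M = max M0 0"
    have M: "\<And>n. n \<ge> 1 \<Longrightarrow> sqrt (A n) * sqrt (B n) \<le> M" "M \<ge> 0"
      using M0 unfolding M_def by (auto simp: le_max_iff_disj)
    have bound: "sqrt (P t) * sqrt (T t) \<le> 2 * M" if "a < ereal t" "ereal t < b" for t
    proof (cases "K = 0")
      case True
      have "T t \<le> K" unfolding T_def K_def using that by (intro mono_k ioo_sub) auto
      then have "T t = 0" using True Tnn[of t] by simp
      then show ?thesis using M(2) by simp
    next
      case False
      then have Kpos: "K > 0" using Knn by simp
      have A_ge: "(1/2)^k * K \<le> A k" if "k \<ge> 1" for k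
      proof -
        have "T (c (k-1)) \<le> A k + T (c k)"
          unfolding T_def A_def using that cge assms(8)
          by (intro split_k) (auto intro: cmono less_imp_le)
        moreover have "T (c (k-1)) = 2 * (1/2)^k * K"
          using hT[of "k-1"] that by (cases k) auto
        ultimately show ?thesis using hT[of k] by (simp add: mult.commute)
      qed
      have B_le: "B k \<le> M^2 * 2^k / K" if "k \<ge> 1" for k
      proof -
        have "(1/2)^k * K > 0" using Kpos by simp
        then have Apos: "A k > 0" using A_ge[OF that] by (rule less_le_trans)
        have "sqrt (A k * B k) \<le> M" using M(1)[OF that] by (simp add: real_sqrt_mult)
        have ABnn: "A k * B k \<ge> 0" using Ann[of k] Bnn[of k] by simp
        have "A k * B k = (sqrt (A k * B k))^2" using ABnn by simp
        also have "\<dots> \<le> M^2" by (rule power_mono) (use \<open>sqrt (A k * B k) \<le> M\<close> ABnn in simp_all)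
        finally have "A k * B k \<le> M^2" .
        then have "B k \<le> M^2 / A k" using Apos by (simp add: pos_le_divide_eq mult.commute)
        also have "\<dots> \<le> M^2 / ((1/2)^k * K)"
          using A_ge[OF that] Kpos Apos by (intro divide_left_mono) auto
        also have "\<dots> = M^2 * 2^k / K" by (simp add: field_simps power_one_over)
        finally show ?thesis .
      qed
      have P_le: "P (c n) \<le> M^2 * 2^(n+1) / K" for n
      proof (induction n)
        case 0
        have "P (c 0) = 0" unfolding P_def using assms(6) by (simp add: ioo_empty L2sq_empty)
        then show ?case using Kpos by simp
      next
        case (Suc n)
        have cs: "c n \<le> c (Suc n)" by (rule cmono) simp
        have "P (c (Suc n)) \<le> P (c n) + B (Suc n)"
          unfolding P_def B_def diff_Suc_1
          by (rule split_p[OF order.refl cge[of n] cs assms(8)[of "Suc n"]])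
        also have "\<dots> \<le> M^2 * 2^(n+1) / K + M^2 * 2^(Suc n) / K"
          using Suc B_le[of "Suc n"] by simp
        also have "\<dots> = M^2 * 2^(Suc n + 1) / K" by (simp add: field_simps)
        finally show ?case .
      qed
      show ?thesis
      proof (cases "\<exists>n. ereal t < c n")
        case False
        have "T t \<le> (1/2)^n * K" for n
        proof -
          have "T t \<le> T (c n)" unfolding T_def using False cge
            by (intro mono_k ioo_sub) (auto simp: not_less)
          then show ?thesis using hT by simp
        qed
        then have "T t = 0"
        proof -
          { assume "T t \<noteq> 0"
            then have "T t / K > 0" using Tnn[of t] Kpos by simp
            from real_arch_pow_inv[OF this, of "1/2"] obtain n where "(1/2)^n < T t / K" by auto
            then have "(1/2)^n * K < T t" using Kpos by (simp add: field_simps)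
            with \<open>T t \<le> (1/2)^n * K\<close> have False by simp }
          then show ?thesis by blast
        qed
        then show ?thesis using M(2) by simp
      next
        case True
        from exists_least_iff[THEN iffD1, OF True] obtain n where n: "ereal t < c n"
          and nl: "\<And>m. m < n \<Longrightarrow> \<not> ereal t < c m" by blast
        have "n \<noteq> 0"
        proof
          assume "n = 0"
          then have "ereal t < a" using n assms(6) by simp
          with that(1) show False by simp
        qed
        then obtain m where nm: "n = Suc m" by (cases n) auto
        have cm: "c m \<le> ereal t" using nl[of m] nm by auto
        have "T t \<le> T (c m)" unfolding T_def using cm cge
          by (intro mono_k ioo_sub) auto
        also have "\<dots> = (1/2)^m * K" by (rule hT)
        finally have Tt: "T t \<le> (1/2)^m * K" .
        have "P t \<le> P (c n)" unfolding P_def using n assms(8)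
          by (intro mono_p[where z="c n"] ioo_sub) auto
        also have "\<dots> \<le> M^2 * 2^(Suc (Suc m)) / K" using P_le[of n] nm by simp
        finally have Pt: "P t \<le> M^2 * 2^(Suc (Suc m)) / K" .
        have "P t * T t \<le> (M^2 * 2^(Suc (Suc m)) / K) * ((1/2)^m * K)"
          using Pt Tt Pnn Tnn Kpos by (intro mult_mono) auto
        also have "\<dots> = M^2 * (2^(Suc (Suc m)) * (1/2)^m)" using Kpos by (simp add: field_simps)
        also have "\<dots> = (2*M)^2" by (simp only: pow_half_aux) (simp add: power_mult_distrib)
        finally have "sqrt (P t * T t) \<le> sqrt ((2 * M)^2)"
          by (rule real_sqrt_le_mono)
        moreover have "sqrt ((2 * M)^2) = 2 * M" using M(2) by (intro real_sqrt_unique) auto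
        ultimately have "sqrt (P t * T t) \<le> 2 * M" by (rule ord_le_eq_trans)
        then show ?thesis by (simp add: real_sqrt_mult)
      qed
    qed
    have "eventually (\<lambda>t. ereal (L2norm (ioo a t) \<phi> * L2norm (ioo t b) \<kappa>) \<le> ereal (2*M)) (at_left b)"
      unfolding eventually_at_left[OF assms(1)]
    proof (intro exI[of _ a] conjI allI impI)
      fix y assume y: "a < y" "y < b"
      then obtain t where "y = ereal t" by (cases y) auto
      then show "ereal (L2norm (ioo a y) \<phi> * L2norm (ioo y b) \<kappa>) \<le> ereal (2*M)"
        using bound y unfolding fval by auto
    qed (rule assms(1))
    then have "Limsup (at_left b) (\<lambda>t. ereal (L2norm (ioo a t) \<phi> * L2norm (ioo t b) \<kappa>)) \<le> ereal (2*M)"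
      by (rule Limsup_bounded)
    then show "Limsup (at_left b) (\<lambda>t. ereal (L2norm (ioo a t) \<phi> * L2norm (ioo t b) \<kappa>)) < \<infinity>"
      by (rule le_less_trans) simp
  next
    assume lim: "Limsup (at_left b) (\<lambda>t. ereal (L2norm (ioo a t) \<phi> * L2norm (ioo t b) \<kappa>)) < \<infinity>"
    obtain C where "Limsup (at_left b) (\<lambda>t. ereal (L2norm (ioo a t) \<phi> * L2norm (ioo t b) \<kappa>)) < ereal C"
      using lim by (cases "Limsup (at_left b) (\<lambda>t. ereal (L2norm (ioo a t) \<phi> * L2norm (ioo t b) \<kappa>))")
        (auto intro: lt_ex, meson gt_ex)
    from Limsup_lessD[OF this] obtain s where s: "s < b"
      and hs: "\<And>y. s < y \<Longrightarrow> y < b \<Longrightarrow> ereal (L2norm (ioo a y) \<phi> * L2norm (ioo y b) \<kappa>) < ereal C"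
      unfolding eventually_at_left[OF assms(1)] by blast
    from ereal_dense2[of "max a s" b] obtain r where r: "max a s < ereal r" "ereal r < b"
      using s assms(1) by auto
    define N where "N = max (sqrt 2 * C) (sqrt K * sqrt (P (ereal r)))"
    show "bdd_above ((\<lambda>n. L2norm (ioo (c (n - 1)) (c n)) \<kappa> * L2norm (ioo (c (n - 1)) (c n)) \<phi>) ` {1..})"
      unfolding omega
    proof (rule bdd_aboveI2)
      fix n :: nat assume "n \<in> {1..}"
      then have n1: "n \<ge> 1" by simp
      show "sqrt (A n) * sqrt (B n) \<le> N"
      proof (cases "ereal r < c n")
        case True
        have "ereal (sqrt (P (c n)) * sqrt (T (c n))) < ereal C"
          using hs[of "c n"] True r assms(8) unfolding fval by auto
        then have fc: "sqrt (P (c n)) * sqrt (T (c n)) < C" by simp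
        have "A n \<le> T (c (n-1))" unfolding A_def T_def using cge assms(8)
          by (intro mono_k ioo_sub) (auto intro: less_imp_le)
        also have "\<dots> = 2 * T (c n)" using hT[of "n-1"] hT[of n] n1 by (cases n) auto
        finally have An: "A n \<le> 2 * T (c n)" .
        have Bn: "B n \<le> P (c n)" unfolding B_def P_def using cge assms(8)
          by (intro mono_p[where z="c n"] ioo_sub) (auto intro: cmono)
        have "sqrt (A n) * sqrt (B n) \<le> sqrt (2 * T (c n)) * sqrt (P (c n))"
          using An Bn Tnn Bnn Ann Pnn Knn by (intro mult_mono) auto
        also have "\<dots> = sqrt 2 * (sqrt (P (c n)) * sqrt (T (c n)))" by (simp add: real_sqrt_mult)
        also have "\<dots> \<le> sqrt 2 * C" using fc by simp
        finally show ?thesis unfolding N_def by simp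
      next
        case False
        have An: "A n \<le> K" unfolding A_def K_def using cge assms(8)
          by (intro mono_k ioo_sub) (auto intro: less_imp_le)
        have Bn: "B n \<le> P (ereal r)" unfolding B_def P_def using cge False r
          by (intro mono_p[where z="ereal r"] ioo_sub) (auto simp: not_less)
        have "sqrt (A n) * sqrt (B n) \<le> sqrt K * sqrt (P (ereal r))"
          using An Bn Tnn Bnn Ann Pnn Knn by (intro mult_mono) auto
        then show ?thesis unfolding N_def by simp
      qed
    qed
  qed
qed
end
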